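(* Let $h\in\mathbf N$ and let $s$ be a right-infinite word over $\{x,y\}$ such that the frontier $f={}^ts\;y\,x^h\,y\;s$ is admissible. Embed $f$ in the plane and let $t$ be the $SL_2$-tiling with values in $\mathbf N$ extending it. Let $I$ be the lattice point of the embedded path lying between the factor $x^h$ and the following letter $y$ of the middle factor $yx^hy$, and let $J=I+(0,-1)$, $K=I+(0,-2)$. Put $i_n=t(I+n(1,0))$, $j_n=t(J+n(1,-1))$, $k_n=t(K+n(1,-1))$. Then for all $n\in\mathbf N$, $$j_n=(h+1)\,i_n^2\qquad\text{and}\qquad k_n+1=(h+1)\,i_n\,i_{n+1}.$$
   Context: Cartesian coordinates on $\mathbf Z^2$. The transpose ${}^tw$ of a (finite or infinite) word $w$ over $\{x,y\}$ is obtained by reversing $w$ and exchanging $x$ and $y$; the transpose of a right-infinite word is left-infinite. A frontier is a bi-infinite word over $\{x,y\}$, admissible if neither $(x_n)_{n\ge0}$ nor $(x_n)_{n\le0}$ is ultimately constant; it is embedded as lattice points $P_i$ with $P_i-P_{i-1}=(1,0)$ if $x_i=x$ and $(0,1)$ if $x_i=y$. An $SL_2$-tiling extending it is $t:\mathbf Z^2\to\mathbf N$ with $t(a,b+1)t(a+1,b)-t(a,b)t(a+1,b+1)=1$ for all $(a,b)$ and $t(P_i)=1$ for all $i$ (it exists and is unique). *)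

theory Defs
  imports Main "HOL-Library.Product_Plus"
begin

datatype letter = X | Y

fun swap_letter :: "letter \<Rightarrow> letter" where
  "swap_letter X = Y" | "swap_letter Y = X"

text \<open>A right-infinite word is a map nat => letter (position 0 is the first letter);
  a bi-infinite word (frontier) is a map int => letter.\<close>

definition ultimately_constant :: "(nat \<Rightarrow> 'a) \<Rightarrow> bool" where
  "ultimately_constant u \<longleftrightarrow> (\<exists>N c. \<forall>n\<ge>N. u n = c)"

definition admissible :: "(int \<Rightarrow> letter) \<Rightarrow> bool" where
  "admissible f \<longleftrightarrow> \<not> ultimately_constant (\<lambda>n. f (int n))
                   \<and> \<not> ultimately_constant (\<lambda>n. f (- int n))"

text \<open>The middle factor y x^h y occupies
  positions 1, ..., h+2; the transpose of s occupies positions <= 0 (position -m carries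
  the exchanged letter s m); s occupies positions >= h+3 (position h+3+m carries s m).\<close>
definition frontier_word :: "nat \<Rightarrow> (nat \<Rightarrow> letter) \<Rightarrow> int \<Rightarrow> letter" where
  "frontier_word h s i =
     (if i \<le> 0 then swap_letter (s (nat (- i)))
      else if i = 1 then Y
      else if i \<le> int h + 1 then X
      else if i = int h + 2 then Y
      else s (nat (i - int h - 3)))"

definition step :: "letter \<Rightarrow> int \<times> int" where
  "step l = (if l = X then (1, 0) else (0, 1))"

text \<open>P embeds the frontier f in the plane: P i - P (i-1) is (1,0) if the i-th letter is x,
  and (0,1) if it is y.  (The lattice point between letters i and i+1 is P i.)\<close>
definition embedding :: "(int \<Rightarrow> letter) \<Rightarrow> (int \<Rightarrow> int \<times> int) \<Rightarrow> bool" where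
  "embedding f P \<longleftrightarrow> (\<forall>i. P i = P (i - 1) + step (f i))"

definition sl2_tiling :: "(int \<times> int \<Rightarrow> nat) \<Rightarrow> bool" where
  "sl2_tiling t \<longleftrightarrow> (\<forall>a b. int (t (a, b + 1)) * int (t (a + 1, b))
                              - int (t (a, b)) * int (t (a + 1, b + 1)) = 1)"

definition extends_frontier :: "(int \<times> int \<Rightarrow> nat) \<Rightarrow> (int \<Rightarrow> int \<times> int) \<Rightarrow> bool" where
  "extends_frontier t P \<longleftrightarrow> (\<forall>i. t (P i) = 1)"

end

theory Submission
  imports Defs Complex_Main
begin

lemma alg1:
  fixes x1 x2 x1' x2' y1 y2 :: int
  assumes a1: "x1*y1+x2*y2=1" and a2: "x1'*y1+x2'*y2=1" and a3: "x1*x2'-x2*x1'=1"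
  shows "x1' = x1 - y2 \<and> x2' = x2 + y1"
proof -
  define d1 d2 where "d1 = x1'-x1" and "d2 = x2'-x2"
  have e1: "d1*y1+d2*y2=0" using a1 a2 by (simp add: d1_def d2_def algebra_simps)
  have e2: "x1*d2 - x2*d1 = 1" using a3 a1 by (simp add: d1_def d2_def algebra_simps)
  have "d2 = d2*(x1*y1+x2*y2)" using a1 by simp
  also have "\<dots> = y1*(x1*d2 - x2*d1) + x2*(d1*y1+d2*y2)" by (simp add: algebra_simps)
  also have "\<dots> = y1" using e1 e2 by simp
  finally have r2: "d2 = y1" .
  have "d1 = d1*(x1*y1+x2*y2)" using a1 by simp
  also have "\<dots> = -y2*(x1*d2 - x2*d1) + x1*(d1*y1+d2*y2)" by (simp add: algebra_simps)
  also have "\<dots> = -y2" using e1 e2 by simp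
  finally have r1: "d1 = -y2" .
  show ?thesis using r1 r2 by (simp add: d1_def d2_def)
qed

lemma alg2:
  fixes x1 x2 y1' y2' y1 y2 :: int
  assumes a1: "x1*y1+x2*y2=1" and a2: "x1*y1'+x2*y2'=1" and a3: "y1'*y2-y2'*y1=1"
  shows "y1' = y1 + x2 \<and> y2' = y2 - x1"
proof -
  define e1 e2 where "e1 = y1'-y1" and "e2 = y2'-y2"
  have f1: "e1*x1+e2*x2=0" using a1 a2 by (simp add: e1_def e2_def algebra_simps)
  have f2: "e1*y2 - e2*y1 = 1" using a3 by (simp add: e1_def e2_def algebra_simps)
  have "e1 = e1*(x1*y1+x2*y2)" using a1 by simp
  also have "\<dots> = x2*(e1*y2 - e2*y1) + y1*(e1*x1+e2*x2)" by (simp add: algebra_simps)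
  also have "\<dots> = x2" using f1 f2 by simp
  finally have r1: "e1 = x2" .
  have "e2 = e2*(x1*y1+x2*y2)" using a1 by simp
  also have "\<dots> = -x1*(e1*y2 - e2*y1) + y2*(e1*x1+e2*x2)" by (simp add: algebra_simps)
  also have "\<dots> = -x1" using f1 f2 by simp
  finally have r2: "e2 = -x1" .
  show ?thesis using r1 r2 by (simp add: e1_def e2_def)
qed

lemma bc:
  fixes x1 x2 x1' x2' y1 y2 y1' y2' :: int
  shows "(x1*y1'+x2*y2')*(x1'*y1+x2'*y2) - (x1*y1+x2*y2)*(x1'*y1'+x2'*y2')
     = (x1*x2'-x2*x1')*(y1'*y2-y1*y2')"
  by algebra

definition Y1 :: "(int\<Rightarrow>int\<Rightarrow>int) \<Rightarrow> int \<Rightarrow> int" where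
  "Y1 u b = u 1 (-1) * u 0 b - u 0 (-1) * u 1 b"
definition Y2 :: "(int\<Rightarrow>int\<Rightarrow>int) \<Rightarrow> int \<Rightarrow> int" where
  "Y2 u b = u 0 0 * u 1 b - u 1 0 * u 0 b"

context
  fixes u :: "int \<Rightarrow> int \<Rightarrow> int"
  assumes T: "\<forall>a b. u a (b+1) * u (a+1) b - u a b * u (a+1) (b+1) = 1"
    and Pos: "\<forall>a b. u a b > 0"
begin

lemma col3: "\<exists>\<nu>::real. \<forall>b. real_of_int (u a b + u (a+2) b) = \<nu> * real_of_int (u (a+1) b)"
proof -
  define r where "r b = real_of_int (u a b + u (a+2) b) / real_of_int (u (a+1) b)" for b
  have st: "r (b+1) = r b" for b
  proof -
    have t1: "u a (b+1) * u (a+1) b - u a b * u (a+1) (b+1) = 1" using T by blast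
    have t2: "u (a+1) (b+1) * u (a+2) b - u (a+1) b * u (a+2) (b+1) = 1"
      using T[rule_format, of "a+1" b] by (simp add: add.assoc)
    have i: "(u a b + u (a+2) b) * u (a+1) (b+1) = (u a (b+1) + u (a+2) (b+1)) * u (a+1) b"
      using t1 t2 by (simp add: algebra_simps)
    have p1: "real_of_int (u (a+1) b) \<noteq> 0" "real_of_int (u (a+1) (b+1)) \<noteq> 0" using Pos
      by (metis of_int_eq_0_iff order_less_irrefl)+
    have i2: "real_of_int (u a (b+1) + u (a+2) (b+1)) * real_of_int (u (a+1) b)
       = real_of_int (u a b + u (a+2) b) * real_of_int (u (a+1) (b+1))"
      by (simp only: of_int_mult[symmetric] i[symmetric])
    show ?thesis unfolding r_def
      by (rule frac_eq_eq[THEN iffD2, OF p1(2) p1(1) i2])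
  qed
  have "r b = r 0" for b
  proof (induction b rule: int_induct[where k=0])
    case base then show ?case by simp
  next
    case (step1 i) then show ?case using st[of i] by simp
  next
    case (step2 i) then show ?case using st[of "i-1"] by simp
  qed
  then have "real_of_int (u a b + u (a+2) b) = r 0 * real_of_int (u (a+1) b)" for b
    using Pos unfolding r_def
    by (metis (no_types, lifting) r_def \<open>\<And>b. r b = r 0\<close> nonzero_eq_divide_eq of_int_eq_0_iff order_less_irrefl)
  then show ?thesis by blast
qed

lemma detX0: "u 0 0 * u 1 (-1) - u 0 (-1) * u 1 0 = 1"
  using T[rule_format, of 0 "-1"] by simp

lemma XY: "u a 0 * Y1 u b + u a (-1) * Y2 u b = u a b"
proof -
  let ?Q = "\<lambda>a. \<forall>b. u a 0 * Y1 u b + u a (-1) * Y2 u b = u a b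
              \<and> u (a+1) 0 * Y1 u b + u (a+1) (-1) * Y2 u b = u (a+1) b"
  have Q0: "?Q 0"
  proof
    fix b
    have "u 0 0 * Y1 u b + u 0 (-1) * Y2 u b = u 0 b * (u 0 0 * u 1 (-1) - u 0 (-1) * u 1 0)"
      by (simp add: Y1_def Y2_def algebra_simps)
    moreover have "u 1 0 * Y1 u b + u 1 (-1) * Y2 u b = u 1 b * (u 0 0 * u 1 (-1) - u 0 (-1) * u 1 0)"
      by (simp add: Y1_def Y2_def algebra_simps)
    ultimately show "u 0 0 * Y1 u b + u 0 (-1) * Y2 u b = u 0 b
              \<and> u (0+1) 0 * Y1 u b + u (0+1) (-1) * Y2 u b = u (0+1) b"
      using detX0 by simp
  qed
  have "?Q i" for i
  proof (induction i rule: int_induct[where k=0])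
    case base then show ?case using Q0 .
  next
    case (step1 i)
    obtain \<nu> where nu: "\<forall>b. real_of_int (u i b + u (i+2) b) = \<nu> * real_of_int (u (i+1) b)"
      using col3 by blast
    have "u (i+2) 0 * Y1 u b + u (i+2) (-1) * Y2 u b = u (i+2) b" for b
    proof -
      have e0: "real_of_int (u (i+2) 0) = \<nu> * u (i+1) 0 - u i 0" using nu by (smt (verit) of_int_add)
      have e1: "real_of_int (u (i+2) (-1)) = \<nu> * u (i+1) (-1) - u i (-1)" using nu by (smt (verit) of_int_add)
      have eb: "real_of_int (u (i+2) b) = \<nu> * u (i+1) b - u i b" using nu by (smt (verit) of_int_add)
      have h1: "real_of_int (u i 0) * Y1 u b + real_of_int (u i (-1)) * Y2 u b = u i b"
        using step1(2) by (metis of_int_add of_int_mult)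
      have h2: "real_of_int (u (i+1) 0) * Y1 u b + real_of_int (u (i+1) (-1)) * Y2 u b = u (i+1) b"
        using step1(2) by (metis of_int_add of_int_mult)
      have "real_of_int (u (i+2) 0 * Y1 u b + u (i+2) (-1) * Y2 u b)
          = \<nu> * (real_of_int (u (i+1) 0) * Y1 u b + real_of_int (u (i+1) (-1)) * Y2 u b)
            - (real_of_int (u i 0) * Y1 u b + real_of_int (u i (-1)) * Y2 u b)"
        by (simp only: of_int_add of_int_mult e0 e1) (simp add: algebra_simps)
      also have "\<dots> = real_of_int (u (i+2) b)" using h1 h2 eb by simp
      finally show ?thesis by (simp only: of_int_eq_iff)
    qed
    then show ?case using step1(2) by (simp add: add.assoc)
  next
    case (step2 i)
    obtain \<nu> where nu: "\<forall>b. real_of_int (u (i-1) b + u (i-1+2) b) = \<nu> * real_of_int (u (i-1+1) b)"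
      using col3 by blast
    have nu': "\<forall>b. real_of_int (u (i-1) b) = \<nu> * real_of_int (u i b) - u (i+1) b"
      using nu by (simp add: algebra_simps)
    have "u (i-1) 0 * Y1 u b + u (i-1) (-1) * Y2 u b = u (i-1) b" for b
    proof -
      have e0: "real_of_int (u (i-1) 0) = \<nu> * u i 0 - u (i+1) 0" using nu' by blast
      have e1: "real_of_int (u (i-1) (-1)) = \<nu> * u i (-1) - u (i+1) (-1)" using nu' by blast
      have eb: "real_of_int (u (i-1) b) = \<nu> * u i b - u (i+1) b" using nu' by blast
      have h1: "real_of_int (u i 0) * Y1 u b + real_of_int (u i (-1)) * Y2 u b = u i b"
        using step2(2) by (metis of_int_add of_int_mult)
      have h2: "real_of_int (u (i+1) 0) * Y1 u b + real_of_int (u (i+1) (-1)) * Y2 u b = u (i+1) b"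
        using step2(2) by (metis of_int_add of_int_mult)
      have "real_of_int (u (i-1) 0 * Y1 u b + u (i-1) (-1) * Y2 u b)
          = \<nu> * (real_of_int (u i 0) * Y1 u b + real_of_int (u i (-1)) * Y2 u b)
            - (real_of_int (u (i+1) 0) * Y1 u b + real_of_int (u (i+1) (-1)) * Y2 u b)"
        by (simp only: of_int_add of_int_mult e0 e1) (simp add: algebra_simps)
      also have "\<dots> = real_of_int (u (i-1) b)" using h1 h2 eb by simp
      finally show ?thesis by (simp only: of_int_eq_iff)
    qed
    then show ?case using step2(2) by simp
  qed
  then show ?thesis by blast
qed

lemma xstep:
  assumes "u a b = 1" "u (a+1) b = 1"
  shows "u (a+1) 0 = u a 0 - Y2 u b \<and> u (a+1) (-1) = u a (-1) + Y1 u b"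
proof -
  have d: "u a 0 * u (a+1) (-1) - u a (-1) * u (a+1) 0 = 1"
    using T[rule_format, of a "-1"] by simp
  show ?thesis
    using alg1[OF XY[of a b, unfolded assms(1)] XY[of "a+1" b, unfolded assms(2)] d] .
qed

lemma ystep:
  assumes "u a b = 1" "u a (b+1) = 1"
  shows "Y1 u (b+1) = Y1 u b + u a (-1) \<and> Y2 u (b+1) = Y2 u b - u a 0"
proof -
  have "u 0 (b+1) * u 1 b - u 0 b * u 1 (b+1) = 1" using T[rule_format, of 0 b] by simp
  then have "(u 0 0 * Y1 u (b+1) + u 0 (-1) * Y2 u (b+1)) * (u 1 0 * Y1 u b + u 1 (-1) * Y2 u b)
     - (u 0 0 * Y1 u b + u 0 (-1) * Y2 u b) * (u 1 0 * Y1 u (b+1) + u 1 (-1) * Y2 u (b+1)) = 1"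
    by (simp only: XY)
  then have "(u 0 0 * u 1 (-1) - u 0 (-1) * u 1 0) * (Y1 u (b+1) * Y2 u b - Y1 u b * Y2 u (b+1)) = 1"
    by (simp only: bc)
  then have "Y1 u (b+1) * Y2 u b - Y1 u b * Y2 u (b+1) = 1" using detX0 by simp
  then have d: "Y1 u (b+1) * Y2 u b - Y2 u (b+1) * Y1 u b = 1" by (metis mult.commute)
  show ?thesis
    using alg2[OF XY[of a b, unfolded assms(1)] XY[of a "b+1", unfolded assms(2)] d] .
qed

end

theorem lemma2:
  fixes h :: nat and s :: "nat \<Rightarrow> letter"
    and P :: "int \<Rightarrow> int \<times> int" and t :: "int \<times> int \<Rightarrow> nat"
  assumes adm: "admissible (frontier_word h s)"
    and emb: "embedding (frontier_word h s) P"
    and til: "sl2_tiling t"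
    and pos: "\<forall>p. t p > 0"
    and ext: "extends_frontier t P"
  shows "\<forall>n::nat.
           (let I = P (int h + 1); J = I + (0, -1); K = I + (0, -2);
                i = (\<lambda>m::nat. t (I + (int m, 0)));
                j = (\<lambda>m::nat. t (J + (int m, - int m)));
                k = (\<lambda>m::nat. t (K + (int m, - int m)))
            in j n = (h + 1) * (i n)^2 \<and> k n + 1 = (h + 1) * i n * i (n + 1))"
proof -
  define f where "f = frontier_word h s"
  define I where "I = P (int h + 1)"
  define u where "u a b = int (t (fst I + a, snd I + b))" for a b
  have T: "\<forall>a b. u a (b+1) * u (a+1) b - u a b * u (a+1) (b+1) = 1"
  proof (intro allI)
    fix a b
    have "int (t (fst I + a, snd I + b + 1)) * int (t (fst I + a + 1, snd I + b))
       - int (t (fst I + a, snd I + b)) * int (t (fst I + a + 1, snd I + b + 1)) = 1"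
      using til unfolding sl2_tiling_def by blast
    then show "u a (b+1) * u (a+1) b - u a b * u (a+1) (b+1) = 1" by (simp add: u_def add.assoc)
  qed
  have Pos: "\<forall>a b. u a b > 0" using pos by (simp add: u_def)
  have ext': "u (fst (P i) - fst I) (snd (P i) - snd I) = 1" for i
    using ext by (simp add: u_def extends_frontier_def)
  have emb2: "fst (P (j+1)) = fst (P j) + fst (step (f (j+1))) \<and> snd (P (j+1)) = snd (P j) + snd (step (f (j+1)))" for j
    using emb unfolding embedding_def f_def by (metis add_diff_cancel_right' fst_add snd_add)
  have stX: "step X = (1,0)" and stY: "step Y = (0,1)" by (simp_all add: step_def)
  have fY1: "f 1 = Y" by (simp add: f_def frontier_word_def)
  have fX: "f i = X" if "2 \<le> i" "i \<le> int h + 1" for i using that by (simp add: f_def frontier_word_def)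
  have fY2: "f (int h + 2) = Y" by (simp add: f_def frontier_word_def)
  have fs: "f (int h + 2 + int m + 1) = s m" for m by (simp add: f_def frontier_word_def)
  have fneg: "f (- int m) = swap_letter (s m)" for m by (simp add: f_def frontier_word_def)
  have hor: "fst (P (int h + 1 - int k)) = fst I - int k \<and> snd (P (int h + 1 - int k)) = snd I" if "k \<le> h" for k
    using that
  proof (induction k)
    case 0 then show ?case by (simp add: I_def)
  next
    case (Suc k)
    have e1: "int h + 1 - int (Suc k) = int h - int k" by simp
    have e2: "int h - int k + 1 = int h + 1 - int k" by simp
    have "f (int h + 1 - int k) = X" using Suc.prems by (intro fX) auto
    then show ?case using emb2[of "int h - int k", unfolded e2] Suc by (simp add: e1 stX)
  qed
  have u00: "u 0 0 = 1" using ext'[of "int h + 1"] by (simp add: I_def)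
  have urow0: "u (- int k) 0 = 1" if "k \<le> h" for k
    using ext'[of "int h + 1 - int k"] hor[OF that] by simp
  have P1: "fst (P 1) = fst I - int h \<and> snd (P 1) = snd I" using hor[of h] by simp
  have P0: "fst (P 0) = fst I - int h \<and> snd (P 0) = snd I - 1"
    using emb2[of 0] P1 by (simp add: fY1 stY)
  have um: "u (- int h) (-1) = 1" using ext'[of 0] P0 by simp
  have Ph2: "fst (P (int h + 2)) = fst I \<and> snd (P (int h + 2)) = snd I + 1"
    using emb2[of "int h + 1"] fY2 by (simp add: stY I_def add.assoc)
  have u01: "u 0 1 = 1" using ext'[of "int h + 2"] Ph2 by simp
  have Y10: "Y1 u 0 = 1" using detX0[OF T Pos] by (simp add: Y1_def mult.commute)
  have Y20: "Y2 u 0 = 0" by (simp add: Y2_def mult.commute)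
  have Y1m: "Y1 u (-1) = 0" by (simp add: Y1_def mult.commute)
  have Y2m: "Y2 u (-1) = 1" using detX0[OF T Pos] by (simp add: Y2_def mult.commute)
  have rowm: "u (- int h + int d) (-1) = 1 + int d" if "d \<le> h" for d
    using that
  proof (induction d)
    case 0 then show ?case using um by simp
  next
    case (Suc d)
    have e1: "- int (h - d) = - int h + int d" using Suc.prems by simp
    have e2: "- int (h - Suc d) = - int h + int d + 1" using Suc.prems by simp
    have a1: "u (- int h + int d) 0 = 1" by (metis e1 urow0 diff_le_self)
    have a2: "u (- int h + int d + 1) 0 = 1" by (metis e2 urow0 diff_le_self)
    have "u (- int h + int d + 1) (-1) = u (- int h + int d) (-1) + Y1 u 0"
      using xstep[OF T Pos a1 a2] by simp
    then have r: "u (- int h + int d + 1) (-1) = 1 + int (Suc d)" using Suc by (simp add: Y10)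
    have e3: "- int h + int (Suc d) = - int h + int d + 1" by simp
    show ?case using r by (simp only: e3)
  qed
  have u0m: "u 0 (-1) = int h + 1" using rowm[of h] by simp
  have Y11: "Y1 u 1 = int h + 2" and Y21: "Y2 u 1 = -1"
    using ystep[OF T Pos, of 0 0] u00 u01 Y10 Y20 u0m by simp_all
  define pa where "pa m = fst (P (int h + 2 + int m)) - fst I" for m
  define pb where "pb m = snd (P (int h + 2 + int m)) - snd I" for m
  define qa where "qa m = fst (P (- int m)) - fst I" for m
  define qb where "qb m = snd (P (- int m)) - snd I" for m
  have uW: "u (pa m) (pb m) = 1" for m unfolding pa_def pb_def by (rule ext')
  have uV: "u (qa m) (qb m) = 1" for m unfolding qa_def qb_def by (rule ext')
  have mvW: "fst (P (int h + 2 + int (Suc m))) = fst (P (int h + 2 + int m)) + fst (step (s m))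
     \<and> snd (P (int h + 2 + int (Suc m))) = snd (P (int h + 2 + int m)) + snd (step (s m))" for m
  proof -
    have e: "int h + 2 + int (Suc m) = int h + 2 + int m + 1" by simp
    show ?thesis unfolding e using emb2[of "int h + 2 + int m"] fs[of m] by simp
  qed
  have mvV: "fst (P (- int m)) = fst (P (- int (Suc m))) + fst (step (swap_letter (s m)))
     \<and> snd (P (- int m)) = snd (P (- int (Suc m))) + snd (step (swap_letter (s m)))" for m
  proof -
    have e: "- int m = - int (Suc m) + 1" by simp
    show ?thesis using emb2[of "- int (Suc m)", unfolded e[symmetric]] fneg[of m] by simp
  qed
  have mvX: "pa (Suc m) = pa m + 1 \<and> pb (Suc m) = pb m \<and> qa m = qa (Suc m) \<and> qb m = qb (Suc m) + 1"
    if "s m = X" for m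
    using mvW[of m] mvV[of m] that by (simp add: pa_def pb_def qa_def qb_def stX stY)
  have mvY: "pa (Suc m) = pa m \<and> pb (Suc m) = pb m + 1 \<and> qa m = qa (Suc m) + 1 \<and> qb m = qb (Suc m)"
    if "s m = Y" for m
    using mvW[of m] mvV[of m] that by (simp add: pa_def pb_def qa_def qb_def stX stY)
  have base: "pa 0 = 0 \<and> pb 0 = 1 \<and> qa 0 = - int h \<and> qb 0 = -1"
    using Ph2 P0 by (simp add: pa_def pb_def qa_def qb_def)
  have S: "qa m = 1 - int h - pb m \<and> qb m = -1 - pa m \<and> pa m \<ge> 0
      \<and> Y1 u (qb m) = (int h+1) * u (pa m) 0 - u (pa m) (-1) \<and> Y2 u (qb m) = u (pa m) 0
      \<and> u (qa m) 0 = - Y2 u (pb m) \<and> u (qa m) (-1) = Y1 u (pb m) + (int h+1) * Y2 u (pb m)" for m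
  proof (induction m)
    case 0
    have "u (- int h) 0 = 1" using urow0[of h] by simp
    then show ?case using base um u00 u0m Y1m Y2m Y11 Y21 by simp
  next
    case (Suc m)
    show ?case
    proof (cases "s m")
      case X
      note mv = mvX[OF X]
      have w2: "u (pa m + 1) (pb m) = 1" using uW[of "Suc m"] mv by simp
      have xs: "u (pa m + 1) 0 = u (pa m) 0 - Y2 u (pb m) \<and> u (pa m + 1) (-1) = u (pa m) (-1) + Y1 u (pb m)"
        by (rule xstep[OF T Pos uW w2])
      have v2: "u (qa (Suc m)) (qb (Suc m) + 1) = 1" using uV[of m] mv by simp
      have ys: "Y1 u (qb (Suc m) + 1) = Y1 u (qb (Suc m)) + u (qa (Suc m)) (-1)
           \<and> Y2 u (qb (Suc m) + 1) = Y2 u (qb (Suc m)) - u (qa (Suc m)) 0"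
        by (rule ystep[OF T Pos uV v2])
      have e: "qb (Suc m) + 1 = qb m" using mv by simp
      have q: "qa (Suc m) = qa m" using mv by simp
      have ys': "Y1 u (qb (Suc m)) = Y1 u (qb m) - u (qa m) (-1)
           \<and> Y2 u (qb (Suc m)) = Y2 u (qb m) + u (qa m) 0" using ys unfolding e q by simp
      from Suc.IH have i1: "qa m = 1 - int h - pb m" and i2: "qb m = -1 - pa m" and i3: "pa m \<ge> 0"
        and i4: "Y1 u (qb m) = (int h+1) * u (pa m) 0 - u (pa m) (-1)" and i5: "Y2 u (qb m) = u (pa m) 0"
        and i6: "u (qa m) 0 = - Y2 u (pb m)" and i7: "u (qa m) (-1) = Y1 u (pb m) + (int h+1) * Y2 u (pb m)"
        by auto
      have g4: "Y1 u (qb (Suc m)) = (int h+1) * u (pa (Suc m)) 0 - u (pa (Suc m)) (-1)"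
      proof -
        have "Y1 u (qb (Suc m)) = Y1 u (qb m) - u (qa m) (-1)" using ys' by simp
        also have "\<dots> = ((int h+1) * u (pa m) 0 - u (pa m) (-1)) - (Y1 u (pb m) + (int h+1) * Y2 u (pb m))"
          using i4 i7 by simp
        also have "\<dots> = (int h+1) * (u (pa m) 0 - Y2 u (pb m)) - (u (pa m) (-1) + Y1 u (pb m))"
          by (simp add: algebra_simps)
        also have "\<dots> = (int h+1) * u (pa (Suc m)) 0 - u (pa (Suc m)) (-1)" using xs mv by simp
        finally show ?thesis .
      qed
      have g5: "Y2 u (qb (Suc m)) = u (pa (Suc m)) 0" using ys' i5 i6 xs mv by simp
      have g6: "u (qa (Suc m)) 0 = - Y2 u (pb (Suc m))" using i6 mv by simp
      have g7: "u (qa (Suc m)) (-1) = Y1 u (pb (Suc m)) + (int h+1) * Y2 u (pb (Suc m))" using i7 mv by simp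
      show ?thesis using g4 g5 g6 g7 i1 i2 i3 mv by simp
    next
      case Y
      note mv = mvY[OF Y]
      have w2: "u (pa m) (pb m + 1) = 1" using uW[of "Suc m"] mv by simp
      have ys: "Y1 u (pb m + 1) = Y1 u (pb m) + u (pa m) (-1) \<and> Y2 u (pb m + 1) = Y2 u (pb m) - u (pa m) 0"
        by (rule ystep[OF T Pos uW w2])
      have v2: "u (qa (Suc m) + 1) (qb (Suc m)) = 1" using uV[of m] mv by simp
      have xs: "u (qa (Suc m) + 1) 0 = u (qa (Suc m)) 0 - Y2 u (qb (Suc m))
          \<and> u (qa (Suc m) + 1) (-1) = u (qa (Suc m)) (-1) + Y1 u (qb (Suc m))"
        by (rule xstep[OF T Pos uV v2])
      have e: "qa (Suc m) + 1 = qa m" using mv by simp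
      have q: "qb (Suc m) = qb m" using mv by simp
      have xs': "u (qa (Suc m)) 0 = u (qa m) 0 + Y2 u (qb m)
          \<and> u (qa (Suc m)) (-1) = u (qa m) (-1) - Y1 u (qb m)" using xs unfolding e q by simp
      from Suc.IH have i1: "qa m = 1 - int h - pb m" and i2: "qb m = -1 - pa m" and i3: "pa m \<ge> 0"
        and i4: "Y1 u (qb m) = (int h+1) * u (pa m) 0 - u (pa m) (-1)" and i5: "Y2 u (qb m) = u (pa m) 0"
        and i6: "u (qa m) 0 = - Y2 u (pb m)" and i7: "u (qa m) (-1) = Y1 u (pb m) + (int h+1) * Y2 u (pb m)"
        by auto
      have g4: "Y1 u (qb (Suc m)) = (int h+1) * u (pa (Suc m)) 0 - u (pa (Suc m)) (-1)" using i4 mv by simp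
      have g5: "Y2 u (qb (Suc m)) = u (pa (Suc m)) 0" using i5 mv by simp
      have g6: "u (qa (Suc m)) 0 = - Y2 u (pb (Suc m))" using xs' i6 i5 ys mv by simp
      have g7: "u (qa (Suc m)) (-1) = Y1 u (pb (Suc m)) + (int h+1) * Y2 u (pb (Suc m))"
      proof -
        have "u (qa (Suc m)) (-1) = u (qa m) (-1) - Y1 u (qb m)" using xs' by simp
        also have "\<dots> = (Y1 u (pb m) + (int h+1) * Y2 u (pb m)) - ((int h+1) * u (pa m) 0 - u (pa m) (-1))"
          using i4 i7 by simp
        also have "\<dots> = (Y1 u (pb m) + u (pa m) (-1)) + (int h+1) * (Y2 u (pb m) - u (pa m) 0)"
          by (simp add: algebra_simps)
        also have "\<dots> = Y1 u (pb (Suc m)) + (int h+1) * Y2 u (pb (Suc m))" using ys mv by simp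
        finally show ?thesis .
      qed
      show ?thesis using g4 g5 g6 g7 i1 i2 i3 mv by simp
    qed
  qed
  have infX: "\<exists>k\<ge>m. s k = X" for m
  proof (rule ccontr)
    assume "\<not> (\<exists>k\<ge>m. s k = X)"
    then have allY: "s k = Y" if "k \<ge> m" for k using that by (metis letter.exhaust)
    have "f (int n) = Y" if "n \<ge> m + h + 3" for n
    proof -
      have e: "int n = int h + 2 + int (n - h - 3) + 1" using that by simp
      show ?thesis unfolding e fs using allY that by simp
    qed
    then have "ultimately_constant (\<lambda>n. f (int n))" unfolding ultimately_constant_def by blast
    then show False using adm unfolding admissible_def f_def by blast
  qed
  have walk: "\<forall>m. pa m = c \<longrightarrow> s (m + d) = X \<longrightarrow> (\<exists>m'. pa m' = c + 1)" for c d
  proof (induction d)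
    case 0 then show ?case using mvX by auto
  next
    case (Suc d)
    show ?case
    proof (intro allI impI)
      fix m assume a: "pa m = c" "s (m + Suc d) = X"
      show "\<exists>m'. pa m' = c + 1"
      proof (cases "s m")
        case X then show ?thesis using mvX[OF X] a by auto
      next
        case Y
        have "pa (Suc m) = c" "s (Suc m + d) = X" using mvY[OF Y] a by auto
        then show ?thesis using Suc.IH by blast
      qed
    qed
  qed
  have exist: "\<exists>m. pa m = int n" for n
  proof (induction n)
    case 0 then show ?case using base by auto
  next
    case (Suc n)
    then obtain m where m: "pa m = int n" by blast
    obtain k where k: "k \<ge> m" "s k = X" using infX by blast
    have "s (m + (k - m)) = X" using k by simp
    then obtain m' where "pa m' = int n + 1" using walk[of "int n" "k - m"] m by blast
    then show ?case by (metis of_nat_Suc add.commute)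
  qed
  have pt: "I + (a,b) + (c,d) = (fst I + (a + c), snd I + (b + d))" for a b c d
    by (simp add: prod_eq_iff)
  have pt0: "I + (a,b) = (fst I + a, snd I + b)" for a b
    by (simp add: prod_eq_iff)
  show ?thesis unfolding Let_def I_def[symmetric]
  proof (intro allI conjI)
    fix n :: nat
    obtain m1 where m1: "pa m1 = int n" using exist by blast
    obtain m2 where m2: "pa m2 = int n + 1" using exist[of "Suc n"] by (metis of_nat_Suc add.commute)
    have q1: "qb m1 = -1 - int n" and y11: "Y1 u (-1 - int n) = (int h+1) * u (int n) 0 - u (int n) (-1)"
      and y21: "Y2 u (-1 - int n) = u (int n) 0" using S[of m1] m1 by auto
    have q2: "qb m2 = -2 - int n" using S[of m2] m2 by simp
    have y12: "Y1 u (-2 - int n) = (int h+1) * u (int n + 1) 0 - u (int n + 1) (-1)"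
      and y22: "Y2 u (-2 - int n) = u (int n + 1) 0" using S[of m2, unfolded m2 q2] by auto
    have detn: "u (int n) 0 * u (int n + 1) (-1) - u (int n) (-1) * u (int n + 1) 0 = 1"
      using T[rule_format, of "int n" "-1"] by simp
    have J: "u (int n) (-1 - int n) = (int h+1) * (u (int n) 0)^2"
    proof -
      have "u (int n) (-1 - int n) = u (int n) 0 * Y1 u (-1 - int n) + u (int n) (-1) * Y2 u (-1 - int n)"
        using XY[OF T Pos] by simp
      also have "\<dots> = (int h+1) * (u (int n) 0)^2" unfolding y11 y21 by (simp add: algebra_simps power2_eq_square)
      finally show ?thesis .
    qed
    have K: "u (int n) (-2 - int n) + 1 = (int h+1) * u (int n) 0 * u (int n + 1) 0"
    proof -
      have "u (int n) (-2 - int n) = u (int n) 0 * Y1 u (-2 - int n) + u (int n) (-1) * Y2 u (-2 - int n)"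
        using XY[OF T Pos] by simp
      also have "\<dots> = (int h+1) * u (int n) 0 * u (int n + 1) 0
          - (u (int n) 0 * u (int n + 1) (-1) - u (int n) (-1) * u (int n + 1) 0)"
        unfolding y12 y22 by (simp add: algebra_simps)
      finally show ?thesis using detn by simp
    qed
    have tj: "int (t (I + (0, -1) + (int n, - int n))) = u (int n) (-1 - int n)"
      unfolding pt u_def by simp
    have tk: "int (t (I + (0, -2) + (int n, - int n))) = u (int n) (-2 - int n)"
      unfolding pt u_def by simp
    have ti: "int (t (I + (int m, 0))) = u (int m) 0" for m
      unfolding pt0 u_def by simp
    have ti1: "u (int n + 1) 0 = int (t (I + (int (n+1), 0)))" using ti[of "n+1"] by (simp add: add.commute)
    have "int (t (I + (0, -1) + (int n, - int n))) = int ((h + 1) * t (I + (int n, 0)) ^ 2)"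
      using tj J ti[of n] by (simp add: algebra_simps)
    then show "t (I + (0, -1) + (int n, - int n)) = (h + 1) * t (I + (int n, 0)) ^ 2"
      by (simp only: of_nat_eq_iff)
    have "int (t (I + (0, -2) + (int n, - int n)) + 1) = int ((h + 1) * t (I + (int n, 0)) * t (I + (int (n + 1), 0)))"
      using tk K ti[of n] ti1 by (simp add: algebra_simps)
    then show "t (I + (0, -2) + (int n, - int n)) + 1 = (h + 1) * t (I + (int n, 0)) * t (I + (int (n + 1), 0))"
      by (simp only: of_nat_eq_iff)
  qed
qed
end
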